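(* Let $k,l,m$ be positive integers and let $G=G(k,l,m)$ be the tree defined as follows: start with a vertex $y$; add vertices $x_1,\dots,x_k$ each adjacent to $y$; for each $a\in\{1,\dots,k\}$ add vertices $w_{a,1},\dots,w_{a,l}$ each adjacent to $x_a$; for each $a,b$ add a vertex $v_{a,b}$ adjacent to $w_{a,b}$; and for each $a,b$ add $m$ leaves $u_{a,b,1},\dots,u_{a,b,m}$ adjacent to $v_{a,b}$. Then $n(G)=klm+2kl+k+1$, $\gamma_t(G)=2kl+1$, and $\Gamma_t(G)=k\big((m+1)^l-m^l\big)^k$.
   Context: For a graph $G$ without isolated vertices, a set $D\subseteq V(G)$ is total dominating if every vertex of $G$ has a neighbour in $D$. The total domination number $\gamma_t(G)$ is the minimum size of a total dominating set, and $\Gamma_t(G)$ is the number of total dominating sets of size $\gamma_t(G)$. $n(G)$ is the number of vertices. *)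

theory Defs
  imports Main
begin

definition total_dominating :: "'a set \<Rightarrow> ('a \<Rightarrow> 'a \<Rightarrow> bool) \<Rightarrow> 'a set \<Rightarrow> bool" where
  "total_dominating Vs E D \<longleftrightarrow> D \<subseteq> Vs \<and> (\<forall>v\<in>Vs. \<exists>u\<in>D. E v u)"

definition total_domination_number :: "'a set \<Rightarrow> ('a \<Rightarrow> 'a \<Rightarrow> bool) \<Rightarrow> nat" where
  "total_domination_number Vs E = (LEAST n. \<exists>D. total_dominating Vs E D \<and> card D = n)"

definition num_min_total_dominating :: "'a set \<Rightarrow> ('a \<Rightarrow> 'a \<Rightarrow> bool) \<Rightarrow> nat" where
  "num_min_total_dominating Vs E =
     card {D. total_dominating Vs E D \<and> card D = total_domination_number Vs E}"

datatype vtx = Y | X nat | W nat nat | V nat nat | U nat nat nat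

definition G_verts :: "nat \<Rightarrow> nat \<Rightarrow> nat \<Rightarrow> vtx set" where
  "G_verts k l m = {Y} \<union> {X a | a. a \<in> {1..k}}
     \<union> {W a b | a b. a \<in> {1..k} \<and> b \<in> {1..l}}
     \<union> {V a b | a b. a \<in> {1..k} \<and> b \<in> {1..l}}
     \<union> {U a b c | a b c. a \<in> {1..k} \<and> b \<in> {1..l} \<and> c \<in> {1..m}}"

definition G_edges :: "nat \<Rightarrow> nat \<Rightarrow> nat \<Rightarrow> (vtx \<times> vtx) set" where
  "G_edges k l m = {(Y, X a) | a. a \<in> {1..k}}
     \<union> {(X a, W a b) | a b. a \<in> {1..k} \<and> b \<in> {1..l}}
     \<union> {(W a b, V a b) | a b. a \<in> {1..k} \<and> b \<in> {1..l}}
     \<union> {(V a b, U a b c) | a b c. a \<in> {1..k} \<and> b \<in> {1..l} \<and> c \<in> {1..m}}"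

definition G_adj :: "nat \<Rightarrow> nat \<Rightarrow> nat \<Rightarrow> vtx \<Rightarrow> vtx \<Rightarrow> bool" where
  "G_adj k l m u v \<longleftrightarrow> (u, v) \<in> G_edges k l m \<or> (v, u) \<in> G_edges k l m"

end

theory Submission imports Defs "HOL-Library.FuncSet" begin

lemma verts_simps[simp]:
 "Y \<in> G_verts k l m"
 "X a \<in> G_verts k l m \<longleftrightarrow> a \<in> {1..k}"
 "W a b \<in> G_verts k l m \<longleftrightarrow> a \<in> {1..k} \<and> b \<in> {1..l}"
 "V a b \<in> G_verts k l m \<longleftrightarrow> a \<in> {1..k} \<and> b \<in> {1..l}"
 "U a b c \<in> G_verts k l m \<longleftrightarrow> a \<in> {1..k} \<and> b \<in> {1..l} \<and> c \<in> {1..m}"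
  by (auto simp: G_verts_def)

lemma adj_simps[simp]:
 "G_adj k l m Y v \<longleftrightarrow> (\<exists>a\<in>{1..k}. v = X a)"
 "G_adj k l m (X a) v \<longleftrightarrow> a \<in> {1..k} \<and> (v = Y \<or> (\<exists>b\<in>{1..l}. v = W a b))"
 "G_adj k l m (W a b) v \<longleftrightarrow> a \<in> {1..k} \<and> b \<in> {1..l} \<and> (v = X a \<or> v = V a b)"
 "G_adj k l m (V a b) v \<longleftrightarrow> a \<in> {1..k} \<and> b \<in> {1..l} \<and> (v = W a b \<or> (\<exists>c\<in>{1..m}. v = U a b c))"
 "G_adj k l m (U a b c) v \<longleftrightarrow> a \<in> {1..k} \<and> b \<in> {1..l} \<and> c \<in> {1..m} \<and> v = V a b"
  by (cases v; auto simp: G_adj_def G_edges_def)+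

lemma verts_eq: "G_verts k l m = insert Y (X ` {1..k} \<union> (\<lambda>(a,b). W a b) ` ({1..k}\<times>{1..l})
   \<union> (\<lambda>(a,b). V a b) ` ({1..k}\<times>{1..l}) \<union> (\<lambda>(a,b,c). U a b c) ` ({1..k}\<times>{1..l}\<times>{1..m}))"
  apply (rule set_eqI) subgoal for x by (cases x) (auto intro: rev_image_eqI[where x="(a,b,c)" for a b c]) done

lemma card_verts: "card (G_verts k l m) = k * l * m + 2 * k * l + k + 1"
proof -
  let ?P = "{1..k}\<times>{1..l}"
  have c1: "card (X ` {1..k}) = k" by (subst card_image) (auto simp: inj_on_def)
  have c2: "card ((\<lambda>(a,b). W a b) ` ?P) = k*l" by (subst card_image) (auto simp: inj_on_def)
  have c3: "card ((\<lambda>(a,b). V a b) ` ?P) = k*l" by (subst card_image) (auto simp: inj_on_def)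
  have c4: "card ((\<lambda>(a,b,c). U a b c) ` ({1..k}\<times>{1..l}\<times>{1..m})) = k*l*m" by (subst card_image) (auto simp: inj_on_def)
  have "card (G_verts k l m) = Suc (card (X ` {1..k} \<union> (\<lambda>(a,b). W a b) ` ?P
   \<union> (\<lambda>(a,b). V a b) ` ?P \<union> (\<lambda>(a,b,c). U a b c) ` ({1..k}\<times>{1..l}\<times>{1..m})))"
    unfolding verts_eq by (subst card_insert_disjoint) auto
  also have "\<dots> = Suc (k + k*l + k*l + k*l*m)"
    apply (subst card_Un_disjoint, simp, simp, fastforce)+
    using c1 c2 c3 c4 by simp
  finally show ?thesis by (simp add: algebra_simps)
qed


definition PP :: "nat \<Rightarrow> nat \<Rightarrow> (nat\<times>nat) set" where "PP k l = {1..k} \<times> {1..l}"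
definition grp :: "nat \<Rightarrow> nat \<Rightarrow> nat \<Rightarrow> vtx set" where "grp m a b = insert (W a b) (U a b ` {1..m})"
definition mk :: "nat \<Rightarrow> nat \<Rightarrow> nat \<Rightarrow> (nat \<Rightarrow> nat \<Rightarrow> vtx) \<Rightarrow> vtx set" where
  "mk k l a0 H = insert (X a0) ((\<lambda>(a,b). V a b) ` PP k l \<union> (\<lambda>(a,b). H a b) ` PP k l)"

lemma grp_disj: "x \<in> grp m a b \<Longrightarrow> x \<in> grp m a' b' \<Longrightarrow> a = a' \<and> b = b'"
  by (auto simp: grp_def)

lemma grp_not: "x \<in> grp m a b \<Longrightarrow> x \<noteq> X c \<and> x \<noteq> V c d \<and> x \<noteq> Y"
  by (auto simp: grp_def)

lemma mk_card:
  assumes H: "\<forall>(a,b)\<in>PP k l. H a b \<in> grp m a b"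
  shows "card (mk k l a0 H) = 2*k*l+1"
proof -
  have fin: "finite (PP k l)" by (simp add: PP_def)
  have cP: "card (PP k l) = k*l" by (simp add: PP_def)
  have i1: "inj_on (\<lambda>(a,b). V a b) (PP k l)" by (auto simp: inj_on_def)
  have i2: "inj_on (\<lambda>(a,b). H a b) (PP k l)"
  proof (rule inj_onI, clarsimp)
    fix a b a' b' assume "(a,b) \<in> PP k l" "(a',b') \<in> PP k l" "H a b = H a' b'"
    moreover have "H a b \<in> grp m a b" "H a' b' \<in> grp m a' b'" using H calculation by auto
    ultimately show "a = a' \<and> b = b'" using grp_disj[of "H a b" m a b a' b'] by auto
  qed
  have d: "(\<lambda>(a,b). V a b) ` PP k l \<inter> (\<lambda>(a,b). H a b) ` PP k l = {}"
  proof -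
    { fix x assume "x \<in> (\<lambda>(a,b). V a b) ` PP k l" "x \<in> (\<lambda>(a,b). H a b) ` PP k l"
      then obtain a b where "x = V a b" by auto
      moreover obtain a' b' where "(a',b') \<in> PP k l" "x = H a' b'" using \<open>x \<in> (\<lambda>(a,b). H a b) ` PP k l\<close> by auto
      ultimately have "V a b \<in> grp m a' b'" using H by auto
      hence False using grp_not[of "V a b" m a' b' a b] by simp }
    thus ?thesis by blast
  qed
  have nx: "X a0 \<notin> (\<lambda>(a,b). V a b) ` PP k l \<union> (\<lambda>(a,b). H a b) ` PP k l"
  proof
    assume "X a0 \<in> (\<lambda>(a,b). V a b) ` PP k l \<union> (\<lambda>(a,b). H a b) ` PP k l"
    then obtain a' b' where "(a',b') \<in> PP k l" "X a0 = H a' b'" by auto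
    hence "H a' b' \<in> grp m a' b'" "X a0 = H a' b'" using H by auto
    then show False by (auto simp: grp_def)
  qed
  show ?thesis unfolding mk_def
    using fin nx d card_image[OF i1] card_image[OF i2] cP
    by (simp add: card_Un_disjoint)
qed

lemma mk_inter:
  assumes H: "\<forall>(a,b)\<in>PP k l. H a b \<in> grp m a b" and ab: "(a,b) \<in> PP k l"
  shows "mk k l a0 H \<inter> grp m a b = {H a b}"
proof -
  have "H a b \<in> grp m a b" using H ab by auto
  moreover have "x = H a b" if x1: "x \<in> mk k l a0 H" and x2: "x \<in> grp m a b" for x
  proof -
    from x1 obtain a' b' where "(a',b') \<in> PP k l" "x = H a' b'"
      using grp_not[OF x2] unfolding mk_def by auto
    thus ?thesis using H grp_disj[OF x2, of a' b'] by auto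
  qed
  ultimately show ?thesis using ab by (auto simp: mk_def)
qed

lemma mk_TD:
  assumes a0: "a0 \<in> {1..k}" and H: "\<forall>(a,b)\<in>PP k l. H a b \<in> grp m a b"
    and HW: "\<forall>a\<in>{1..k}. \<exists>b\<in>{1..l}. H a b = W a b"
  shows "total_dominating (G_verts k l m) (G_adj k l m) (mk k l a0 H)"
  unfolding total_dominating_def
proof
  show "mk k l a0 H \<subseteq> G_verts k l m"
  proof
    fix x assume "x \<in> mk k l a0 H"
    then consider "x = X a0" | a b where "(a,b) \<in> PP k l" "x = V a b"
      | a b where "(a,b) \<in> PP k l" "x = H a b" unfolding mk_def by auto
    then show "x \<in> G_verts k l m"
    proof cases
      case 3
      then have "H a b \<in> grp m a b" using H by auto
      then show ?thesis using 3 by (auto simp: grp_def PP_def)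
    qed (use a0 in \<open>auto simp: PP_def\<close>)
  qed
  show "\<forall>v\<in>G_verts k l m. \<exists>u\<in>mk k l a0 H. G_adj k l m v u"
  proof
    fix v assume v: "v \<in> G_verts k l m"
    show "\<exists>u\<in>mk k l a0 H. G_adj k l m v u"
    proof (cases v)
      case Y then show ?thesis using a0 by (auto simp: mk_def)
    next
      case (X a)
      with v have "a \<in> {1..k}" by simp
      then obtain b where "b \<in> {1..l}" "H a b = W a b" using HW by blast
      moreover have "(a,b) \<in> PP k l" using X v \<open>b \<in> {1..l}\<close> by (simp add: PP_def)
      hence "H a b \<in> mk k l a0 H" unfolding mk_def by (blast intro: rev_image_eqI)
      ultimately have "W a b \<in> mk k l a0 H" "G_adj k l m v (W a b)" using X v \<open>b \<in> {1..l}\<close> by auto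
      then show ?thesis by blast
    next
      case (W a b)
      then have "(a,b) \<in> PP k l" using v by (simp add: PP_def)
      hence "V a b \<in> mk k l a0 H" unfolding mk_def by (blast intro: rev_image_eqI)
      then show ?thesis using W v by auto
    next
      case (V a b)
      with v have ab: "(a,b) \<in> PP k l" by (simp add: PP_def)
      hence "H a b \<in> grp m a b" using H by auto
      hence "G_adj k l m v (H a b)" using V v by (auto simp: grp_def)
      moreover have "H a b \<in> mk k l a0 H" using ab unfolding mk_def by (blast intro: rev_image_eqI)
      ultimately show ?thesis by blast
    next
      case (U a b c)
      then have "(a,b) \<in> PP k l" using v by (simp add: PP_def)
      hence "V a b \<in> mk k l a0 H" unfolding mk_def by (blast intro: rev_image_eqI)
      then show ?thesis using U v by auto
    qed
  qed
qed

lemma lower: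
  assumes TD: "total_dominating (G_verts k l m) (G_adj k l m) D" and k: "k \<ge> 1" and m: "m \<ge> 1"
  shows "\<exists>a0 g. a0 \<in> {1..k} \<and> (\<forall>(a,b)\<in>PP k l. g a b \<in> grp m a b) \<and> mk k l a0 g \<subseteq> D"
proof -
  have dom: "\<And>v. v \<in> G_verts k l m \<Longrightarrow> \<exists>u\<in>D. G_adj k l m v u" using TD by (simp add: total_dominating_def)
  obtain a0 where a0: "a0 \<in> {1..k}" "X a0 \<in> D" using dom[of Y] by auto
  have Vin: "V a b \<in> D" if "(a,b) \<in> PP k l" for a b
    using dom[of "U a b 1"] that m by (auto simp: PP_def)
  have gex: "\<exists>x. x \<in> D \<inter> grp m a b" if "(a,b) \<in> PP k l" for a b
    using dom[of "V a b"] that by (auto simp: PP_def grp_def)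
  define g where "g a b = (SOME x. x \<in> D \<inter> grp m a b)" for a b
  have g: "g a b \<in> D \<inter> grp m a b" if "(a,b) \<in> PP k l" for a b
    unfolding g_def using someI_ex[OF gex[OF that]] .
  show ?thesis
    apply (rule exI[of _ a0], rule exI[of _ g])
    using a0 g Vin by (auto simp: mk_def)
qed

lemma TD_finite: "total_dominating (G_verts k l m) E D \<Longrightarrow> finite D"
proof -
  assume "total_dominating (G_verts k l m) E D"
  hence "D \<subseteq> G_verts k l m" by (simp add: total_dominating_def)
  moreover have "finite (G_verts k l m)" unfolding verts_eq by simp
  ultimately show "finite D" by (rule finite_subset)
qed

lemma TD_card:
  assumes TD: "total_dominating (G_verts k l m) (G_adj k l m) D" and k: "k \<ge> 1" and m: "m \<ge> 1"
  shows "2*k*l+1 \<le> card D"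
proof -
  obtain a0 g where g: "\<forall>(a,b)\<in>PP k l. g a b \<in> grp m a b" and s: "mk k l a0 g \<subseteq> D"
    using lower[OF assms] by blast
  have "card (mk k l a0 g) \<le> card D" by (rule card_mono[OF TD_finite[OF TD] s])
  thus ?thesis using mk_card[OF g] by simp
qed

lemma gamma:
  assumes k: "k \<ge> 1" and l: "l \<ge> 1" and m: "m \<ge> 1"
  shows "total_domination_number (G_verts k l m) (G_adj k l m) = 2*k*l+1"
  unfolding total_domination_number_def
proof (rule Least_equality)
  have H: "\<forall>(a,b)\<in>PP k l. W a b \<in> grp m a b" by (auto simp: grp_def)
  show "\<exists>D. total_dominating (G_verts k l m) (G_adj k l m) D \<and> card D = 2*k*l+1"
  proof (intro exI conjI)
    show "total_dominating (G_verts k l m) (G_adj k l m) (mk k l 1 (\<lambda>a b. W a b))"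
      by (rule mk_TD) (use k l H in auto)
    show "card (mk k l 1 (\<lambda>a b. W a b)) = 2*k*l+1" by (rule mk_card[OF H])
  qed
next
  fix n assume "\<exists>D. total_dominating (G_verts k l m) (G_adj k l m) D \<and> card D = n"
  thus "2*k*l+1 \<le> n" using TD_card k m by blast
qed


definition GoodA :: "nat \<Rightarrow> nat \<Rightarrow> nat \<Rightarrow> (nat \<Rightarrow> vtx) set" where
  "GoodA l m a = PiE {1..l} (grp m a) - PiE {1..l} (\<lambda>b. U a b ` {1..m})"
definition Good :: "nat \<Rightarrow> nat \<Rightarrow> nat \<Rightarrow> (nat \<Rightarrow> nat \<Rightarrow> vtx) set" where
  "Good k l m = PiE {1..k} (GoodA l m)"

lemma Good_grp: assumes "H \<in> Good k l m" shows "\<forall>(a,b)\<in>PP k l. H a b \<in> grp m a b"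
proof (clarify)
  fix a b assume "(a,b) \<in> PP k l"
  hence a: "a \<in> {1..k}" and b: "b \<in> {1..l}" by (auto simp: PP_def)
  have "H a \<in> GoodA l m a" using assms a unfolding Good_def by (rule PiE_mem)
  hence "H a \<in> PiE {1..l} (grp m a)" by (simp add: GoodA_def)
  thus "H a b \<in> grp m a b" using b by (rule PiE_mem)
qed

lemma Good_W: assumes "H \<in> Good k l m" shows "\<forall>a\<in>{1..k}. \<exists>b\<in>{1..l}. H a b = W a b"
proof
  fix a assume a: "a \<in> {1..k}"
  hence h: "H a \<in> GoodA l m a" using assms by (auto simp: Good_def)
  then have h1: "H a \<in> PiE {1..l} (grp m a)" and h2: "H a \<notin> PiE {1..l} (\<lambda>b. U a b ` {1..m})"
    by (auto simp: GoodA_def)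
  from h1 have ext: "H a \<in> extensional {1..l}" using PiE_iff by blast
  have "\<exists>b\<in>{1..l}. H a b \<notin> U a b ` {1..m}"
  proof (rule ccontr)
    assume "\<not> ?thesis"
    hence "H a \<in> PiE {1..l} (\<lambda>b. U a b ` {1..m})" using ext by (auto simp: PiE_def)
    thus False using h2 by simp
  qed
  then obtain b where b: "b \<in> {1..l}" "H a b \<notin> U a b ` {1..m}" by blast
  moreover have "H a b \<in> grp m a b" using h1 b by auto
  ultimately show "\<exists>b\<in>{1..l}. H a b = W a b" by (auto simp: grp_def)
qed

lemma card_grp: "card (grp m a b) = m + 1"
proof -
  have "card (U a b ` {1..m}) = m" by (subst card_image) (auto simp: inj_on_def)
  thus ?thesis unfolding grp_def by (subst card_insert_disjoint) auto
qed

lemma card_Good: "card (Good k l m) = ((m + 1) ^ l - m ^ l) ^ k"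
proof -
  have cU: "card (U a b ` {1..m}) = m" for a b by (subst card_image) (auto simp: inj_on_def)
  have cU': "card (U a b ` {Suc 0..m}) = m" for a b using cU by simp
  have "card (GoodA l m a) = (m + 1) ^ l - m ^ l" for a
  proof -
    have sub: "PiE {1..l} (\<lambda>b. U a b ` {1..m}) \<subseteq> PiE {1..l} (grp m a)"
      by (rule PiE_mono) (auto simp: grp_def)
    have "card (GoodA l m a) = card (PiE {1..l} (grp m a)) - card (PiE {1..l} (\<lambda>b. U a b ` {1..m}))"
      unfolding GoodA_def by (rule card_Diff_subset[OF _ sub]) (auto intro: finite_PiE simp: grp_def)
    also have "\<dots> = (m + 1) ^ l - m ^ l" by (simp add: card_PiE card_grp cU cU')
    finally show ?thesis .
  qed
  thus ?thesis unfolding Good_def by (simp add: card_PiE)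
qed

lemma mk_inj_aux:
  assumes A: "(a0,H) \<in> {1..k} \<times> Good k l m" "(a0',H') \<in> {1..k} \<times> Good k l m"
    and eq: "mk k l a0 H = mk k l a0' H'"
  shows "a0 = a0' \<and> H = H'"
proof (intro conjI)
  have HH: "H \<in> Good k l m" "H' \<in> Good k l m" using A by auto
  have g: "\<forall>(a,b)\<in>PP k l. H a b \<in> grp m a b" "\<forall>(a,b)\<in>PP k l. H' a b \<in> grp m a b"
    using Good_grp[OF HH(1)] Good_grp[OF HH(2)] by auto
  have "X a0 \<in> mk k l a0 H" unfolding mk_def by blast
  hence "X a0 \<in> mk k l a0' H'" using eq by simp
  moreover have "X a0 \<notin> (\<lambda>(a,b). V a b) ` PP k l" by auto
  moreover have "X a0 \<notin> (\<lambda>(a,b). H' a b) ` PP k l"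
  proof
    assume "X a0 \<in> (\<lambda>(a,b). H' a b) ` PP k l"
    then obtain a b where "(a,b) \<in> PP k l" "X a0 = H' a b" by auto
    hence "H' a b \<in> grp m a b" "X a0 = H' a b" using g(2) by auto
    thus False by (auto simp: grp_def)
  qed
  ultimately show "a0 = a0'" unfolding mk_def by blast
  show "H = H'"
  proof (rule ext, rule ext)
    fix a b
    show "H a b = H' a b"
    proof (cases "(a,b) \<in> PP k l")
      case True
      then show ?thesis using mk_inter[OF g(1) True, of a0] mk_inter[OF g(2) True, of a0'] eq by auto
    next
      case False
      have e1: "H \<in> extensional {1..k}" "H' \<in> extensional {1..k}"
        using HH unfolding Good_def PiE_iff by blast+
      show ?thesis
      proof (cases "a \<in> {1..k}")
        case False2: False
        have "H a = undefined" by (rule extensional_arb[OF e1(1) False2])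
        moreover have "H' a = undefined" by (rule extensional_arb[OF e1(2) False2])
        ultimately show ?thesis by simp
      next
        case True
        with False have nb: "b \<notin> {1..l}" by (simp add: PP_def)
        have "H a \<in> GoodA l m a" using HH(1) True unfolding Good_def by (rule PiE_mem)
        hence "H a \<in> PiE {1..l} (grp m a)" unfolding GoodA_def by (rule DiffD1)
        hence x1: "H a \<in> extensional {1..l}" unfolding PiE_iff by (rule conjunct2)
        have "H' a \<in> GoodA l m a" using HH(2) True unfolding Good_def by (rule PiE_mem)
        hence "H' a \<in> PiE {1..l} (grp m a)" unfolding GoodA_def by (rule DiffD1)
        hence x2: "H' a \<in> extensional {1..l}" unfolding PiE_iff by (rule conjunct2)
        have "H a b = undefined" by (rule extensional_arb[OF x1 nb])
        moreover have "H' a b = undefined" by (rule extensional_arb[OF x2 nb])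
        ultimately show ?thesis by simp
      qed
    qed
  qed
qed

lemma mk_inj: "inj_on (\<lambda>(a0,H). mk k l a0 H) ({1..k} \<times> Good k l m)"
  by (rule inj_onI) (use mk_inj_aux in force)

lemma S_eq:
  assumes k: "k \<ge> 1" and m: "m \<ge> 1"
  shows "{D. total_dominating (G_verts k l m) (G_adj k l m) D \<and> card D = 2*k*l+1}
       = (\<lambda>(a0,H). mk k l a0 H) ` ({1..k} \<times> Good k l m)"
proof (rule set_eqI, rule iffI)
  fix D assume "D \<in> (\<lambda>(a0,H). mk k l a0 H) ` ({1..k} \<times> Good k l m)"
  then obtain a0 H where a0: "a0 \<in> {1..k}" and H: "H \<in> Good k l m" and D: "D = mk k l a0 H" by auto
  have "total_dominating (G_verts k l m) (G_adj k l m) D"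
    unfolding D by (rule mk_TD[OF a0 Good_grp[OF H] Good_W[OF H]])
  moreover have "card D = 2*k*l+1" unfolding D by (rule mk_card[OF Good_grp[OF H]])
  ultimately show "D \<in> {D. total_dominating (G_verts k l m) (G_adj k l m) D \<and> card D = 2*k*l+1}"
    by simp
next
  fix D assume "D \<in> {D. total_dominating (G_verts k l m) (G_adj k l m) D \<and> card D = 2*k*l+1}"
  hence TD: "total_dominating (G_verts k l m) (G_adj k l m) D" and cD: "card D = 2*k*l+1" by auto
  obtain a0 g where a0: "a0 \<in> {1..k}" and g: "\<forall>(a,b)\<in>PP k l. g a b \<in> grp m a b"
    and s: "mk k l a0 g \<subseteq> D"
    using lower[OF TD k m] by blast
  have Deq: "mk k l a0 g = D"
    using card_subset_eq[OF TD_finite[OF TD] s] mk_card[OF g] cD by simp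
  define H where "H = (\<lambda>a\<in>{1..k}. \<lambda>b\<in>{1..l}. g a b)"
  have HG: "\<forall>(a,b)\<in>PP k l. H a b = g a b" by (auto simp: H_def PP_def)
  have mkH: "mk k l a0 H = mk k l a0 g"
  proof -
    have "(\<lambda>(a,b). H a b) ` PP k l = (\<lambda>(a,b). g a b) ` PP k l"
      by (rule image_cong) (use HG in auto)
    thus ?thesis unfolding mk_def by simp
  qed
  have "Y \<notin> D"
  proof
    assume "Y \<in> D"
    hence "Y \<in> (\<lambda>(a,b). g a b) ` PP k l" unfolding Deq[symmetric] mk_def by auto
    then obtain a' b' where "(a',b') \<in> PP k l" "Y = g a' b'" by auto
    hence "g a' b' \<in> grp m a' b'" "Y = g a' b'" using g by auto
    then show False by (auto simp: grp_def)
  qed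
  have W: "\<exists>b\<in>{1..l}. g a b = W a b" if a: "a \<in> {1..k}" for a
  proof -
    have "X a \<in> G_verts k l m" using a by simp
    hence "\<exists>u\<in>D. G_adj k l m (X a) u" using TD unfolding total_dominating_def by blast
    then obtain b where b: "b \<in> {1..l}" "W a b \<in> D" using \<open>Y \<notin> D\<close> by auto
    have ab: "(a,b) \<in> PP k l" using a b by (simp add: PP_def)
    have "W a b \<in> mk k l a0 g \<inter> grp m a b" using b Deq by (auto simp: grp_def)
    hence "W a b = g a b" using mk_inter[OF g ab] by auto
    thus ?thesis using b(1) by (intro bexI[of _ b]) auto
  qed
  have "H \<in> Good k l m"
    unfolding Good_def
  proof (rule PiE_I)
    fix a assume a: "a \<in> {1..k}"
    show "H a \<in> GoodA l m a" unfolding GoodA_def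
    proof
      show "H a \<in> PiE {1..l} (grp m a)" using a g by (auto simp: H_def PP_def)
      obtain b where b: "b \<in> {1..l}" "g a b = W a b" using W[OF a] by blast
      show "H a \<notin> PiE {1..l} (\<lambda>b. U a b ` {1..m})"
      proof
        assume "H a \<in> PiE {1..l} (\<lambda>b. U a b ` {1..m})"
        hence "H a b \<in> U a b ` {1..m}" using b by auto
        thus False using b a by (auto simp: H_def)
      qed
    qed
  next
    fix a assume "a \<notin> {1..k}" thus "H a = undefined" unfolding H_def by (auto simp: restrict_def)
  qed
  thus "D \<in> (\<lambda>(a0,H). mk k l a0 H) ` ({1..k} \<times> Good k l m)"
    using a0 mkH Deq by (auto intro!: rev_image_eqI[where x="(a0,H)"])
qed

theorem mainTheorem5:
  fixes k l m :: nat
  assumes "k \<ge> 1" and "l \<ge> 1" and "m \<ge> 1"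
  shows "card (G_verts k l m) = k * l * m + 2 * k * l + k + 1
       \<and> total_domination_number (G_verts k l m) (G_adj k l m) = 2 * k * l + 1
       \<and> num_min_total_dominating (G_verts k l m) (G_adj k l m)
           = k * ((m + 1) ^ l - m ^ l) ^ k"
proof (intro conjI)
  show "card (G_verts k l m) = k * l * m + 2 * k * l + k + 1" by (rule card_verts)
  show g: "total_domination_number (G_verts k l m) (G_adj k l m) = 2 * k * l + 1"
    using gamma assms by blast
  have "num_min_total_dominating (G_verts k l m) (G_adj k l m)
      = card ((\<lambda>(a0,H). mk k l a0 H) ` ({1..k} \<times> Good k l m))"
    unfolding num_min_total_dominating_def g S_eq[OF assms(1,3)] ..
  also have "\<dots> = card ({1..k} \<times> Good k l m)" by (rule card_image[OF mk_inj])
  also have "\<dots> = k * ((m + 1) ^ l - m ^ l) ^ k"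
    by (simp add: card_cartesian_product card_Good)
  finally show "num_min_total_dominating (G_verts k l m) (G_adj k l m) = k * ((m + 1) ^ l - m ^ l) ^ k" .
qed

end
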